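(* Let $n\ge 1$, let $x_1,\dots,x_n$ be distinct integers each greater than $1$, and let $D=\{1,0,x_1,\dots,x_n\}$. If $(T,s)$ is an optimal signed tree realizing $D$ and $ab$ is an edge of $T$ with $s(ab)=-$, then $sdeg(a)=sdeg(b)=0$.
   Context: A signed tree is a pair $(T,s)$ where $T$ is a finite tree and $s:E(T)\to\{+,-\}$. The signed degree $sdeg(v)$ of a vertex is the number of incident positive edges minus the number of incident negative edges. $(T,s)$ realizes $D$ if $D=\{sdeg(v):v\in V(T)\}$. $\sigma(D)=\min\{|V(T)|: \text{some signed tree }(T,s)\text{ realizes }D\}$, and a signed tree $(T,s)$ realizing $D$ is optimal if $|V(T)|=\sigma(D)$. *)

theory Defs
  imports Main
begin

definition is_tree :: "'a set \<Rightarrow> 'a set set \<Rightarrow> bool" where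
  "is_tree V E \<longleftrightarrow>
     finite V \<and> V \<noteq> {} \<and>
     (\<forall>e\<in>E. \<exists>u v. u \<in> V \<and> v \<in> V \<and> u \<noteq> v \<and> e = {u, v}) \<and>
     (\<forall>u\<in>V. \<forall>v\<in>V. (u, v) \<in> {(p, q). {p, q} \<in> E}\<^sup>*) \<and>
     card E = card V - 1"

text \<open>Signs: s e = True means positive, s e = False means negative.\<close>
definition sdeg :: "'a set set \<Rightarrow> ('a set \<Rightarrow> bool) \<Rightarrow> 'a \<Rightarrow> int" where
  "sdeg E s v = int (card {e\<in>E. v \<in> e \<and> s e}) - int (card {e\<in>E. v \<in> e \<and> \<not> s e})"

definition realizes :: "'a set \<Rightarrow> 'a set set \<Rightarrow> ('a set \<Rightarrow> bool) \<Rightarrow> int set \<Rightarrow> bool" where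
  "realizes V E s D \<longleftrightarrow> is_tree V E \<and> D = sdeg E s ` V"

text \<open>Minimum order of a signed tree realizing D (trees up to isomorphism, represented on nat).\<close>
definition sigma :: "int set \<Rightarrow> nat" where
  "sigma D = (LEAST k. \<exists>(V::nat set) E s. realizes V E s D \<and> card V = k)"

definition optimal :: "'a set \<Rightarrow> 'a set set \<Rightarrow> ('a set \<Rightarrow> bool) \<Rightarrow> int set \<Rightarrow> bool" where
  "optimal V E s D \<longleftrightarrow> realizes V E s D \<and> card V = sigma D"

end

theory Submission
  imports Defs
begin


lemma tree_unf:
  assumes "is_tree V E"
  shows "finite V" "V \<noteq> {}" "\<forall>e\<in>E. \<exists>u v. u \<in> V \<and> v \<in> V \<and> u \<noteq> v \<and> e = {u, v}"
     "\<forall>u\<in>V. \<forall>v\<in>V. (u, v) \<in> {(p, q). {p, q} \<in> E}\<^sup>*" "card E = card V - 1"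
  using assms unfolding is_tree_def by blast+

lemma tree_basic:
  assumes "is_tree V E"
  shows "finite V" "\<And>e. e \<in> E \<Longrightarrow> e \<subseteq> V" "\<And>e. e \<in> E \<Longrightarrow> card e = 2" "finite E"
    "card E = card V - 1" "V \<noteq> {}"
proof -
  note U = tree_unf[OF assms]
  show fV: "finite V" by (rule U(1))
  show sub: "e \<subseteq> V" if eE: "e \<in> E" for e
  proof -
    obtain p q where "p \<in> V" "q \<in> V" "e = {p,q}" using U(3) eE by meson
    then show ?thesis by simp
  qed
  show "card e = 2" if eE: "e \<in> E" for e
  proof -
    obtain p q where "p \<noteq> q" "e = {p,q}" using U(3) eE by meson
    then show ?thesis by simp
  qed
  show "finite E" using fV sub by (meson Pow_iff finite_Pow_iff finite_subset subsetI)
  show "card E = card V - 1" "V \<noteq> {}" by (rule U(5), rule U(2))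
qed

lemma add_leaf_tree:
  assumes T: "is_tree V E" and u: "u \<in> V" and v: "v \<notin> V"
  shows "is_tree (insert v V) (insert {u,v} E)"
proof -
  note tb = tree_basic[OF T]
  have nE: "{u,v} \<notin> E" using tb(2) v by blast
  let ?R = "{(p, q). {p, q} \<in> E}"
  let ?R' = "{(p, q). {p, q} \<in> insert {u,v} E}"
  have mono: "?R\<^sup>* \<subseteq> ?R'\<^sup>*" by (rule rtrancl_mono) auto
  have conn: "\<forall>p\<in>V. \<forall>q\<in>V. (p, q) \<in> ?R\<^sup>*" by (rule tree_unf(4)[OF T])
  have uv1: "(u,v) \<in> ?R'" "(v,u) \<in> ?R'" by (simp_all add: insert_commute)
  have uv: "(u,v) \<in> ?R'\<^sup>*" "(v,u) \<in> ?R'\<^sup>*" using uv1 by (blast intro: r_into_rtrancl)+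
  have c2: "(p, q) \<in> ?R'\<^sup>*" if "p \<in> insert v V" "q \<in> insert v V" for p q
  proof -
    have A: "(p, u) \<in> ?R'\<^sup>*"
    proof (cases "p = v")
      case True then show ?thesis using uv by simp
    next
      case False then have "p \<in> V" using that(1) by simp
      then have "(p, u) \<in> ?R\<^sup>*" using conn u by blast
      then show ?thesis using mono by blast
    qed
    have B: "(u, q) \<in> ?R'\<^sup>*"
    proof (cases "q = v")
      case True then show ?thesis using uv by simp
    next
      case False then have "q \<in> V" using that(2) by simp
      then have "(u, q) \<in> ?R\<^sup>*" using conn u by blast
      then show ?thesis using mono by blast
    qed
    show ?thesis using A B by (meson rtrancl_trans)
  qed
  have card: "card (insert {u,v} E) = card (insert v V) - 1"
  proof -
    have "card (insert {u,v} E) = card E + 1" using tb(4) nE by simp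
    moreover have "card (insert v V) = card V + 1" using tb(1) v by simp
    moreover have "card V \<ge> 1" using tb(1,6) by (simp add: Suc_leI card_gt_0_iff)
    ultimately show ?thesis using tb(5) by simp
  qed
  have ed: "\<forall>e\<in>insert {u,v} E. \<exists>p q. p \<in> insert v V \<and> q \<in> insert v V \<and> p \<noteq> q \<and> e = {p, q}"
  proof
    fix e assume "e \<in> insert {u,v} E"
    then show "\<exists>p q. p \<in> insert v V \<and> q \<in> insert v V \<and> p \<noteq> q \<and> e = {p, q}"
    proof
      assume "e = {u,v}" then show ?thesis using u v by blast
    next
      assume "e \<in> E" then obtain p q where "p \<in> V" "q \<in> V" "p \<noteq> q" "e = {p,q}"
        using tree_unf(3)[OF T] by blast
      then show ?thesis by blast
    qed
  qed
  have c3: "\<forall>p\<in>insert v V. \<forall>q\<in>insert v V. (p, q) \<in> ?R'\<^sup>*" using c2 by blast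
  show ?thesis unfolding is_tree_def
    apply (intro conjI)
    using tb(1) apply simp
      apply simp
    using ed apply assumption
    using c3 apply assumption
    using card by assumption
qed


lemma add_leaf_sdeg:
  fixes s :: "'a set \<Rightarrow> bool" and b :: bool
  assumes T: "is_tree V E" and u: "u \<in> V" and v: "v \<notin> V"
  defines "E' \<equiv> insert {u,v} E" and "s' \<equiv> s({u,v} := b)"
  shows "\<And>w. w \<in> V \<Longrightarrow> w \<noteq> u \<Longrightarrow> sdeg E' s' w = sdeg E s w"
    "sdeg E' s' v = (if b then 1 else -1)"
    "sdeg E' s' u = sdeg E s u + (if b then 1 else -1)"
proof -
  note tb = tree_basic[OF T]
  have nE: "{u,v} \<notin> E" using tb(2) v by blast
  have sE: "\<And>e. e \<in> E \<Longrightarrow> s' e = s e" using nE unfolding s'_def by auto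
  have vE: "\<And>e. e \<in> E \<Longrightarrow> v \<notin> e" using tb(2) v by blast
  show "sdeg E' s' w = sdeg E s w" if "w \<in> V" "w \<noteq> u" for w
  proof -
    have wv: "w \<noteq> v" using that v by auto
    have "{e\<in>E'. w \<in> e \<and> s' e} = {e\<in>E. w \<in> e \<and> s e}"
      "{e\<in>E'. w \<in> e \<and> \<not> s' e} = {e\<in>E. w \<in> e \<and> \<not> s e}"
      using sE wv that(2) unfolding E'_def by auto
    then show ?thesis unfolding sdeg_def by simp
  qed
  have "{e\<in>E'. v \<in> e \<and> s' e} = (if b then {{u,v}} else {})"
      "{e\<in>E'. v \<in> e \<and> \<not> s' e} = (if b then {} else {{u,v}})"
    using vE unfolding E'_def s'_def by auto
  then show "sdeg E' s' v = (if b then 1 else -1)" unfolding sdeg_def by simp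
  have uv: "u \<noteq> v" using u v by auto
  have fin: "finite {e\<in>E. u \<in> e \<and> s e}" "finite {e\<in>E. u \<in> e \<and> \<not> s e}" using tb(4) by auto
  have "{e\<in>E'. u \<in> e \<and> s' e} = (if b then insert {u,v} {e\<in>E. u \<in> e \<and> s e} else {e\<in>E. u \<in> e \<and> s e})"
       "{e\<in>E'. u \<in> e \<and> \<not> s' e} = (if b then {e\<in>E. u \<in> e \<and> \<not> s e} else insert {u,v} {e\<in>E. u \<in> e \<and> \<not> s e})"
    using sE nE unfolding E'_def s'_def by auto
  then show "sdeg E' s' u = sdeg E s u + (if b then 1 else -1)"
    unfolding sdeg_def using fin nE by (auto simp: card_insert_if)
qed

lemma add_leaves:
  fixes V :: "nat set"
  assumes T: "is_tree V E" and l: "l \<in> V"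
  shows "\<exists>V' E' s'. is_tree V' E' \<and> card V' = card V + m \<and> V \<subseteq> V' \<and>
     (\<forall>w\<in>V-{l}. sdeg E' s' w = sdeg E s w) \<and> sdeg E' s' l = sdeg E s l + int m \<and>
     (\<forall>w\<in>V'-V. sdeg E' s' w = 1)"
proof (induction m)
  case 0
  then show ?case using T by auto
next
  case (Suc m)
  then obtain V' E' s' where IH: "is_tree V' E'" "card V' = card V + m" "V \<subseteq> V'"
     "\<forall>w\<in>V-{l}. sdeg E' s' w = sdeg E s w" "sdeg E' s' l = sdeg E s l + int m"
     "\<forall>w\<in>V'-V. sdeg E' s' w = 1" by blast
  have fV': "finite V'" using tree_basic(1)[OF IH(1)] .
  obtain v where v: "v \<notin> V'" using ex_new_if_finite[OF infinite_UNIV_nat fV'] by blast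
  have lV': "l \<in> V'" using l IH(3) by auto
  note S = add_leaf_sdeg[OF IH(1) lV' v, where s=s' and b=True]
  show ?case
  proof (intro exI conjI)
    show "is_tree (insert v V') (insert {l,v} E')" by (rule add_leaf_tree[OF IH(1) lV' v])
    show "card (insert v V') = card V + Suc m" using IH(2) v fV' by simp
    show "V \<subseteq> insert v V'" using IH(3) by auto
    show "\<forall>w\<in>V-{l}. sdeg (insert {l,v} E') (s'({l,v} := True)) w = sdeg E s w"
      using S(1) IH(3,4) by (metis DiffD1 DiffD2 insertI1 subsetD)
    show "sdeg (insert {l,v} E') (s'({l,v} := True)) l = sdeg E s l + int (Suc m)"
      using S(3) IH(5) by simp
    show "\<forall>w\<in>insert v V' - V. sdeg (insert {l,v} E') (s'({l,v} := True)) w = 1"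
    proof
      fix w assume w: "w \<in> insert v V' - V"
      show "sdeg (insert {l,v} E') (s'({l,v} := True)) w = 1"
      proof (cases "w = v")
        case True then show ?thesis using S(2) by simp
      next
        case False
        then have "w \<in> V'" "w \<noteq> l" "w \<in> V' - V" using w l by auto
        then show ?thesis using S(1) IH(6) by simp
      qed
    qed
  qed
qed


lemma base_tree:
  "\<exists>(V::nat set) E s. \<exists>l\<in>V. is_tree V E \<and> card V = 4 \<and> sdeg E s ` V = {0,1} \<and> sdeg E s l = 1"
proof -
  have T0: "is_tree {0::nat} {}" unfolding is_tree_def by simp
  define s0 :: "nat set \<Rightarrow> bool" where "s0 = (\<lambda>_. True)"
  have d00: "sdeg {} s0 (0::nat) = 0" unfolding sdeg_def by simp
  define E1 :: "nat set set" where "E1 = insert {0,1} {}"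
  define s1 where "s1 = s0({0,1} := True)"
  define V1 :: "nat set" where "V1 = insert 1 {0}"
  have T1: "is_tree V1 E1" unfolding V1_def E1_def by (rule add_leaf_tree[OF T0]) simp_all
  have d10: "sdeg E1 s1 0 = 1" unfolding E1_def s1_def
    using add_leaf_sdeg(3)[OF T0, where u=0 and v=1 and s=s0 and b=True] d00 by simp
  have d11: "sdeg E1 s1 1 = 1" unfolding E1_def s1_def
    using add_leaf_sdeg(2)[OF T0, where u=0 and v=1 and s=s0 and b=True] by simp
  define E2 :: "nat set set" where "E2 = insert {1,2} E1"
  define s2 where "s2 = s1({1,2} := False)"
  define V2 :: "nat set" where "V2 = insert 2 V1"
  have T2: "is_tree V2 E2" unfolding V2_def E2_def by (rule add_leaf_tree[OF T1]) (simp_all add: V1_def)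
  have d20: "sdeg E2 s2 0 = 1" unfolding E2_def s2_def
    using add_leaf_sdeg(1)[OF T1, where u=1 and v=2 and s=s1 and b=False] d10 by (simp add: V1_def)
  have d21: "sdeg E2 s2 1 = 0" unfolding E2_def s2_def
    using add_leaf_sdeg(3)[OF T1, where u=1 and v=2 and s=s1 and b=False] d11 by (simp add: V1_def)
  have d22: "sdeg E2 s2 2 = -1" unfolding E2_def s2_def
    using add_leaf_sdeg(2)[OF T1, where u=1 and v=2 and s=s1 and b=False] by (simp add: V1_def)
  define E3 :: "nat set set" where "E3 = insert {2,3} E2"
  define s3 where "s3 = s2({2,3} := True)"
  define V3 :: "nat set" where "V3 = insert 3 V2"
  have T3: "is_tree V3 E3" unfolding V3_def E3_def by (rule add_leaf_tree[OF T2]) (simp_all add: V1_def V2_def)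
  have d30: "sdeg E3 s3 0 = 1" unfolding E3_def s3_def
    using add_leaf_sdeg(1)[OF T2, where u=2 and v=3 and s=s2 and b=True] d20 by (simp add: V1_def V2_def)
  have d31: "sdeg E3 s3 1 = 0" unfolding E3_def s3_def
    using add_leaf_sdeg(1)[OF T2, where u=2 and v=3 and s=s2 and b=True] d21 by (simp add: V1_def V2_def)
  have d32: "sdeg E3 s3 2 = 0" unfolding E3_def s3_def
    using add_leaf_sdeg(3)[OF T2, where u=2 and v=3 and s=s2 and b=True] d22 by (simp add: V1_def V2_def)
  have d33: "sdeg E3 s3 3 = 1" unfolding E3_def s3_def
    using add_leaf_sdeg(2)[OF T2, where u=2 and v=3 and s=s2 and b=True] by (simp add: V1_def V2_def)
  have V3: "V3 = {0,1,2,3}" unfolding V3_def V2_def V1_def by auto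
  have img: "sdeg E3 s3 ` V3 = {0,1}" unfolding V3 using d30 d31 d32 d33 by auto
  have c: "card V3 = 4" unfolding V3 by simp
  have "0 \<in> V3" unfolding V3 by simp
  then show ?thesis using T3 img c d30 by blast
qed



lemma construct:
  assumes "finite X" "\<forall>y\<in>X. y > (1::int)"
  shows "\<exists>(V::nat set) E s. \<exists>l\<in>V. is_tree V E \<and> int (card V) = (\<Sum>y\<in>X. y - 1) + 4 \<and>
           sdeg E s ` V = {0,1} \<union> X \<and> sdeg E s l = 1"
  using assms
proof (induction X rule: finite_induct)
  case empty
  then show ?case using base_tree by simp
next
  case (insert y X)
  have pX: "\<forall>y\<in>X. y > (1::int)" using insert.prems by simp
  obtain V :: "nat set" and E s l where IH: "l \<in> V" "is_tree V E" "int (card V) = (\<Sum>y\<in>X. y - 1) + 4"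
     "sdeg E s ` V = {0,1} \<union> X" "sdeg E s l = 1" using insert.IH[OF pX] by metis
  have y1: "y > 1" using insert.prems by simp
  define m where "m = nat (y - 1)"
  have m: "int m = y - 1" "m \<ge> 1" using y1 unfolding m_def by auto
  obtain V' E' s' where A: "is_tree V' E'" "card V' = card V + m" "V \<subseteq> V'"
     "\<forall>w\<in>V-{l}. sdeg E' s' w = sdeg E s w" "sdeg E' s' l = sdeg E s l + int m"
     "\<forall>w\<in>V'-V. sdeg E' s' w = 1"
    using add_leaves[OF IH(2,1), of m] by blast
  have fV: "finite V" "finite V'" using tree_basic(1)[OF IH(2)] tree_basic(1)[OF A(1)] by auto
  have "V' - V \<noteq> {}"
  proof
    assume "V' - V = {}" then have "V' \<subseteq> V" by auto
    then have "card V' \<le> card V" using fV card_mono by blast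
    then show False using A(2) m by simp
  qed
  then obtain l' where l': "l' \<in> V' - V" by blast
  have split: "V' = (V - {l}) \<union> {l} \<union> (V' - V)" using A(3) IH(1) by auto
  have img1: "sdeg E' s' ` (V - {l}) = sdeg E s ` (V - {l})" using A(4) by (auto simp: image_def)
  have img2: "sdeg E' s' ` (V' - V) = {1}" using A(6) l' by (auto simp: image_def)
  have img0: "sdeg E s ` V = sdeg E s ` (V - {l}) \<union> {1}" using IH(1,5) by auto
  have ly: "sdeg E' s' l = y" using A(5) IH(5) m by simp
  have "sdeg E' s' ` V' = sdeg E' s' ` (V - {l}) \<union> sdeg E' s' ` {l} \<union> sdeg E' s' ` (V' - V)"
    by (subst split) (simp only: image_Un)
  also have "\<dots> = sdeg E s ` (V - {l}) \<union> {y} \<union> {1}" using img1 img2 ly by simp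
  also have "\<dots> = {0,1} \<union> insert y X" using img0 IH(4) by auto
  finally have img: "sdeg E' s' ` V' = {0,1} \<union> insert y X" .
  have "int (card V') = (\<Sum>y\<in>insert y X. y - 1) + 4"
    using A(2) IH(3) m insert(1,2) by simp
  moreover have "sdeg E' s' l' = 1" using A(6) l' by blast
  moreover have "l' \<in> V'" using l' by blast
  ultimately show ?case using A(1) img by blast
qed



lemma handshake:
  assumes T: "is_tree V E"
  shows "(\<Sum>v\<in>V. card {e\<in>E. v \<in> e \<and> P e}) = 2 * card {e\<in>E. P e}"
proof -
  note tb = tree_basic[OF T]
  let ?EP = "{e\<in>E. P e}"
  have fEP: "finite ?EP" using tb(4) by simp
  have "(\<Sum>v\<in>V. card {e\<in>E. v \<in> e \<and> P e}) = (\<Sum>v\<in>V. \<Sum>e\<in>?EP. if v \<in> e then 1 else 0)"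
  proof (rule sum.cong)
    fix v assume "v \<in> V"
    have "{e\<in>E. v \<in> e \<and> P e} = {e\<in>?EP. v \<in> e}" by auto
    then have "card {e\<in>E. v \<in> e \<and> P e} = (\<Sum>e\<in>{e\<in>?EP. v \<in> e}. 1)" by simp
    also have "\<dots> = (\<Sum>e\<in>?EP. if v \<in> e then 1 else 0)" by (rule sum.inter_filter[OF fEP])
    finally show "card {e\<in>E. v \<in> e \<and> P e} = (\<Sum>e\<in>?EP. if v \<in> e then 1 else 0)" .
  qed simp
  also have "\<dots> = (\<Sum>e\<in>?EP. \<Sum>v\<in>V. if v \<in> e then 1 else 0)" by (rule sum.swap)
  also have "\<dots> = (\<Sum>e\<in>?EP. 2)"
  proof (rule sum.cong)
    fix e assume e: "e \<in> ?EP"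
    have "(\<Sum>v\<in>V. if v \<in> e then 1 else 0) = (\<Sum>v\<in>{v\<in>V. v \<in> e}. 1::nat)"
      by (rule sum.inter_filter[OF tb(1), symmetric])
    also have "{v\<in>V. v \<in> e} = e" using tb(2) e by auto
    also have "(\<Sum>v\<in>e. 1::nat) = 2" using tb(3) e by simp
    finally show "(\<Sum>v\<in>V. if v \<in> e then 1 else 0) = (2::nat)" .
  qed simp
  also have "\<dots> = 2 * card ?EP" by simp
  finally show ?thesis .
qed

lemma has_edge:
  assumes T: "is_tree V E" and v: "v \<in> V" and w: "w \<in> V" "w \<noteq> v"
  shows "\<exists>y. {v, y} \<in> E"
proof -
  have "(v, w) \<in> {(p, q). {p, q} \<in> E}\<^sup>*" using tree_unf(4)[OF T] v w by blast
  then show ?thesis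
  proof (cases rule: converse_rtranclE)
    case base then show ?thesis using w by simp
  next
    case (step y) then show ?thesis by auto
  qed
qed



theorem mainTheorem9:
  fixes n :: nat and x :: "nat \<Rightarrow> int" and D :: "int set"
    and V :: "'a set" and E :: "'a set set" and s :: "'a set \<Rightarrow> bool" and a b :: 'a
  assumes "n \<ge> 1"
    and "inj_on x {1..n}"
    and "\<forall>i\<in>{1..n}. x i > 1"
    and "D = {1, 0} \<union> x ` {1..n}"
    and "optimal V E s D"
    and "{a, b} \<in> E"
    and "\<not> s {a, b}"
  shows "sdeg E s a = 0 \<and> sdeg E s b = 0"
proof -
  have T: "is_tree V E" and Dimg: "D = sdeg E s ` V" and cV: "card V = sigma D"
    using assms(5) unfolding optimal_def realizes_def by auto
  note tb = tree_basic[OF T]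
  define X where "X = x ` {1..n}"
  have fX: "finite X" unfolding X_def by simp
  have X1: "\<forall>y\<in>X. y > 1" using assms(3) unfolding X_def by auto
  have DX: "D = {0,1} \<union> X" using assms(4) unfolding X_def by auto
  define S where "S = (\<Sum>y\<in>X. y - 1)"
  have "\<exists>V0 :: nat set. \<exists>E0 s0. is_tree V0 E0 \<and> int (card V0) = S + 4 \<and> sdeg E0 s0 ` V0 = {0,1} \<union> X"
    using construct[OF fX X1] unfolding S_def by blast
  then obtain V0 :: "nat set" and E0 s0 where C: "is_tree V0 E0" "int (card V0) = S + 4"
     "sdeg E0 s0 ` V0 = {0,1} \<union> X" by blast
  have "sigma D \<le> card V0" unfolding sigma_def
  proof (rule Least_le)
    show "\<exists>(V::nat set) E s. realizes V E s D \<and> card V = card V0"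
      apply (rule exI[of _ V0], rule exI[of _ E0], rule exI[of _ s0])
      using C DX by (simp add: realizes_def)
  qed
  then have NS: "int (card V) \<le> S + 4" using cV C(2) by linarith
  define sd where "sd = sdeg E s"
  define NE where "NE = {e\<in>E. \<not> s e}"
  define PE where "PE = {e\<in>E. s e}"
  define Z where "Z = {v\<in>V. sd v = 0}"
  define H where "H = {v\<in>V. sd v \<ge> 2}"
  have fNE: "finite NE" "finite PE" using tb(4) unfolding NE_def PE_def by auto
  have hp: "(\<Sum>v\<in>V. card {e\<in>E. v \<in> e \<and> s e}) = 2 * card PE"
    using handshake[OF T, of s] unfolding PE_def .
  have hn: "(\<Sum>v\<in>V. card {e\<in>E. v \<in> e \<and> \<not> s e}) = 2 * card NE"
    using handshake[OF T, of "\<lambda>e. \<not> s e"] unfolding NE_def .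
  have sumsd: "(\<Sum>v\<in>V. sd v) = 2 * int (card PE) - 2 * int (card NE)"
  proof -
    have "(\<Sum>v\<in>V. sd v) = (\<Sum>v\<in>V. int (card {e\<in>E. v \<in> e \<and> s e})) - (\<Sum>v\<in>V. int (card {e\<in>E. v \<in> e \<and> \<not> s e}))"
      unfolding sd_def sdeg_def by (rule sum_subtractf)
    also have "\<dots> = int (\<Sum>v\<in>V. card {e\<in>E. v \<in> e \<and> s e}) - int (\<Sum>v\<in>V. card {e\<in>E. v \<in> e \<and> \<not> s e})"
      by simp
    also have "\<dots> = 2 * int (card PE) - 2 * int (card NE)" using hp hn by simp
    finally show ?thesis .
  qed
  have PQ: "card PE + card NE = card E"
  proof -
    have "E = PE \<union> NE" "PE \<inter> NE = {}" unfolding PE_def NE_def by auto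
    then show ?thesis using card_Un_disjoint fNE by metis
  qed
  have V1: "card V \<ge> 1" using tb(1,6) by (simp add: Suc_leI card_gt_0_iff)
  have EV: "int (card E) = int (card V) - 1" using tb(5) V1 by simp
  have sum1: "(\<Sum>v\<in>V. sd v - 1) = int (card V) - 2 - 4 * int (card NE)"
  proof -
    have "(\<Sum>v\<in>V. sd v - 1) = (\<Sum>v\<in>V. sd v) - int (card V)" by (simp add: sum_subtractf)
    then show ?thesis using sumsd PQ EV by linarith
  qed
  define h where "h v = (if sd v \<ge> 2 then sd v - 1 else 0)" for v
  have pt: "sd v - 1 = h v - (if sd v = 0 then 1 else 0)" if "v \<in> V" for v
  proof -
    have "sd v \<in> D" using that Dimg sd_def by auto
    then have "sd v = 0 \<or> sd v = 1 \<or> sd v > 1" using DX X1 by auto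
    then show ?thesis unfolding h_def by auto
  qed
  have sum2: "(\<Sum>v\<in>V. sd v - 1) = (\<Sum>v\<in>V. h v) - (\<Sum>v\<in>V. if sd v = 0 then 1 else 0)"
    using pt by (simp add: sum_subtractf[symmetric])
  have sumZ: "(\<Sum>v\<in>V. if sd v = 0 then 1 else 0) = int (card Z)"
  proof -
    have "(\<Sum>v\<in>V. if sd v = 0 then 1 else (0::int)) = (\<Sum>v\<in>Z. 1)"
      unfolding Z_def by (rule sum.inter_filter[OF tb(1), symmetric])
    then show ?thesis by simp
  qed
  have sumH: "(\<Sum>v\<in>V. h v) = (\<Sum>v\<in>H. sd v - 1)"
    unfolding H_def h_def by (rule sum.inter_filter[OF tb(1), symmetric])
  have imH: "sd ` H = X"
  proof
    show "sd ` H \<subseteq> X"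
    proof
      fix y assume "y \<in> sd ` H"
      then obtain v where v: "v \<in> V" "sd v \<ge> 2" "y = sd v" unfolding H_def by auto
      then have "y \<in> D" using Dimg sd_def by auto
      then show "y \<in> X" using DX v by auto
    qed
    show "X \<subseteq> sd ` H"
    proof
      fix y assume y: "y \<in> X"
      then have "y \<in> sd ` V" using DX Dimg sd_def by auto
      then obtain v where "v \<in> V" "y = sd v" by auto
      then show "y \<in> sd ` H" using X1 y unfolding H_def by force
    qed
  qed
  have fH: "finite H" using tb(1) unfolding H_def by simp
  have "S \<le> (\<Sum>v\<in>H. sd v - 1)"
  proof -
    have "sum (\<lambda>y. y - 1) (sd ` H) \<le> sum ((\<lambda>y. y - 1) \<circ> sd) H"
      by (rule sum_image_le[OF fH]) (simp add: H_def)
    then show ?thesis unfolding S_def imH by (simp add: o_def)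
  qed
  then have low: "int (card V) - 2 - 4 * int (card NE) \<ge> S - int (card Z)"
    using sum1 sum2 sumZ sumH by linarith
  have "0 \<in> sd ` V" "1 \<in> sd ` V" using DX Dimg sd_def by auto
  then obtain v0 v1 where v01: "v0 \<in> V" "v1 \<in> V" "sd v0 = 0" "sd v1 = 1"
    by (metis imageE)
  have ZU: "Z \<subseteq> \<Union>NE"
  proof
    fix v assume "v \<in> Z"
    then have v: "v \<in> V" "sd v = 0" unfolding Z_def by auto
    obtain w where w: "w \<in> V" "w \<noteq> v"
    proof (cases "v = v0")
      case True then show ?thesis using that v01 v by fastforce
    next
      case False then show ?thesis using that v01 by blast
    qed
    obtain y where y: "{v, y} \<in> E" using has_edge[OF T v(1) w] by blast
    have fin2: "finite {e\<in>E. v \<in> e \<and> s e}" "finite {e\<in>E. v \<in> e \<and> \<not> s e}" using tb(4) by auto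
    have eq: "card {e\<in>E. v \<in> e \<and> s e} = card {e\<in>E. v \<in> e \<and> \<not> s e}"
      using v(2) unfolding sd_def sdeg_def by simp
    have "{e\<in>E. v \<in> e \<and> \<not> s e} \<noteq> {}"
    proof (cases "s {v,y}")
      case True
      then have "{e\<in>E. v \<in> e \<and> s e} \<noteq> {}" using y by blast
      then have "card {e\<in>E. v \<in> e \<and> s e} \<noteq> 0" using fin2 by simp
      then have "card {e\<in>E. v \<in> e \<and> \<not> s e} \<noteq> 0" using eq by simp
      then show ?thesis by (metis card.empty)
    next
      case False then show ?thesis using y by blast
    qed
    then show "v \<in> \<Union>NE" unfolding NE_def by blast
  qed
  have cU: "card (\<Union>NE) \<le> 2 * card NE"
  proof -
    have "card (\<Union>NE) \<le> sum card NE" by (rule card_Union_le_sum_card)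
    also have "\<dots> = (\<Sum>e\<in>NE. 2)" using tb(3) unfolding NE_def by (intro sum.cong) auto
    finally show ?thesis by simp
  qed
  have "\<forall>e\<in>NE. finite e" using tb(1,2) finite_subset unfolding NE_def by blast
  then have fU: "finite (\<Union>NE)" using fNE(1) by (simp add: finite_Union)
  have cZ: "card Z \<le> 2 * card NE" using card_mono[OF fU ZU] cU by linarith
  have abNE: "{a,b} \<in> NE" using assms(6,7) unfolding NE_def by simp
  have Q1: "card NE \<ge> 1" using abNE fNE(1) by (metis One_nat_def Suc_leI card_gt_0_iff empty_iff)
  have Q: "card NE = 1" and Z2: "card Z \<ge> 2" using low NS cZ Q1 by linarith+
  then have NEab: "NE = {{a,b}}" using abNE by (metis card_1_singletonE singletonD)
  have ab2: "card {a,b} = 2" using tb(3) assms(6) .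
  have "Z \<subseteq> {a,b}" using ZU NEab by simp
  then have "Z = {a,b}" using Z2 ab2 card_seteq[of "{a,b}" Z] by simp
  then show ?thesis unfolding Z_def sd_def by auto
qed


end
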